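(* Let $d\ge 1$ and $k\in\{1,2\}$. The domain $\mathfrak{D}(\mathcal{A}_k)$ of the arcsine transformation $\mathcal{A}_k$ equals $\mathfrak{M}_L^k(\mathbb{R}^d)$.
   Context: A Lévy measure on $\mathbb{R}^d$ is a measure $\nu$ with $\nu(\{0\})=0$ and $\int_{\mathbb{R}^d}(1\wedge|x|^2)\nu(\mathrm{d}x)<\infty$; their class is $\mathfrak{M}_L(\mathbb{R}^d)=\mathfrak{M}_L^2(\mathbb{R}^d)$, and $\mathfrak{M}_L^1(\mathbb{R}^d)$ is the class of Lévy measures with $\int(1\wedge|x|)\nu(\mathrm{d}x)<\infty$. For $s>0$ set $a_1(r;s)=2\pi^{-1}(s-r^2)^{-1/2}$ for $0<r<s^{1/2}$ and $0$ otherwise; $a_2(r;s)=2\pi^{-1}(s^2-r^2)^{-1/2}$ for $0<r<s$ and $0$ otherwise. For a measure $\nu$ on $\mathbb{R}^d$ with $\nu(\{0\})=0$ and $k=1,2$, define $\mathcal{A}_k(\nu)(B)=\int_{\mathbb{R}^d\setminus\{0\}}\nu(\mathrm{d}x)\int_0^\infty a_k(r;|x|)1_B(r x/|x|)\,\mathrm{d}r$ for Borel $B\subset\mathbb{R}^d$. The domain $\mathfrak{D}(\mathcal{A}_k)$ is the class of measures $\nu$ on $\mathbb{R}^d$ with $\nu(\{0\})=0$ such that $\mathcal{A}_k(\nu)$ is a Lévy measure in $\mathfrak{M}_L(\mathbb{R}^d)$. *)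

theory Defs
  imports "HOL-Analysis.Analysis"
begin

text \<open>Measures on R^d are modelled as measures on a Euclidean space 'a
  (dimension DIM('a) >= 1) whose measurable sets are the Borel sets.\<close>

definition borel_measure_on :: "'a::euclidean_space measure \<Rightarrow> bool" where
  "borel_measure_on nu \<longleftrightarrow> sets nu = sets borel"

definition levy_measure :: "'a::euclidean_space measure \<Rightarrow> bool" where
  "levy_measure nu \<longleftrightarrow> borel_measure_on nu \<and> emeasure nu {0} = 0 \<and>
     (\<integral>\<^sup>+ x. ennreal (min 1 (norm x ^ 2)) \<partial>nu) < \<infinity>"

definition levy_class :: "nat \<Rightarrow> 'a::euclidean_space measure set" where
  "levy_class k = {nu. levy_measure nu \<and>
     (\<integral>\<^sup>+ x. ennreal (min 1 (norm x ^ k)) \<partial>nu) < \<infinity>}"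

definition arcsine_kernel :: "nat \<Rightarrow> real \<Rightarrow> real \<Rightarrow> real" where
  "arcsine_kernel k r s =
     (if k = 1 then (if 0 < r \<and> r < sqrt s then 2 / pi * (s - r\<^sup>2) powr (-1/2) else 0)
      else (if 0 < r \<and> r < s then 2 / pi * (s\<^sup>2 - r\<^sup>2) powr (-1/2) else 0))"

definition arcsine_transform :: "nat \<Rightarrow> 'a::euclidean_space measure \<Rightarrow> 'a measure" where
  "arcsine_transform k nu = measure_of UNIV (sets borel)
     (\<lambda>B. \<integral>\<^sup>+ x. indicator (UNIV - {0}) x *
        (\<integral>\<^sup>+ r. indicator {0<..} r * ennreal (arcsine_kernel k r (norm x))
              * indicator B (r *\<^sub>R (x /\<^sub>R norm x)) \<partial>lborel) \<partial>nu)"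

definition arcsine_domain :: "nat \<Rightarrow> 'a::euclidean_space measure set" where
  "arcsine_domain k = {nu. borel_measure_on nu \<and> emeasure nu {0} = 0 \<and>
                           levy_measure (arcsine_transform k nu)}"

end

theory Submission
  imports Defs
begin

lemma kernel_mass:
  fixes t :: real assumes t: "t > 0"
  shows "(\<integral>\<^sup>+ r. ennreal (indicator {0<..<t} r * (t\<^sup>2 - r\<^sup>2) powr (-1/2)) \<partial>lborel) = ennreal (pi/2)"
proof -
  have d: "((\<lambda>r. arcsin (r / t)) has_real_derivative (t\<^sup>2 - r\<^sup>2) powr (-1/2)) (at r)"
    if r: "r \<in> {0<..<t}" for r
  proof -
    have r1: "-1 < r/t" "r/t < 1" using r t by (auto simp: field_simps)
    have "((\<lambda>r. arcsin (r / t)) has_real_derivative inverse (sqrt (1 - (r/t)\<^sup>2)) * (1/t)) (at r)"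
      by (rule DERIV_chain2[where g="\<lambda>r. r / t", OF DERIV_arcsin[OF r1]]) (use t in \<open>auto intro!: derivative_eq_intros\<close>)
    moreover have "inverse (sqrt (1 - (r/t)\<^sup>2)) * (1/t) = (t\<^sup>2 - r\<^sup>2) powr (-1/2)"
    proof -
      have pos: "t\<^sup>2 - r\<^sup>2 > 0" using r t by (simp add: power_strict_mono)
      have "1 - (r/t)\<^sup>2 = (t\<^sup>2 - r\<^sup>2) / t\<^sup>2" using t by (simp add: field_simps)
      hence "sqrt (1 - (r/t)\<^sup>2) * t = sqrt (t\<^sup>2 - r\<^sup>2)" using t by (simp add: real_sqrt_divide)
      moreover have "(t\<^sup>2 - r\<^sup>2) powr (-1/2) = inverse (sqrt (t\<^sup>2 - r\<^sup>2))"
        using pos by (simp add: powr_minus powr_half_sqrt)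
      moreover have "inverse (sqrt (1 - (r/t)\<^sup>2)) * (1/t) = inverse (sqrt (1 - (r/t)\<^sup>2) * t)"
        by (simp add: inverse_mult_distrib divide_inverse)
      ultimately show ?thesis by simp
    qed
    ultimately show ?thesis by simp
  qed
  have c: "continuous_on {0..t} (\<lambda>r. arcsin (r / t))"
    using t by (intro continuous_intros) (auto simp: field_simps)
  have "((\<lambda>r. (t\<^sup>2 - r\<^sup>2) powr (-1/2)) has_integral (arcsin (t/t) - arcsin (0/t))) {0..t}"
    using t c d by (intro fundamental_theorem_of_calculus_interior) (auto simp: has_real_derivative_iff_has_vector_derivative[symmetric])
  hence "((\<lambda>r. (t\<^sup>2 - r\<^sup>2) powr (-1/2)) has_integral pi/2) {0<..<t}"
    using t by (simp add: has_integral_Icc_iff_Ioo)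
  from nn_integral_has_integral_lebesgue[OF _ this] show ?thesis by simp
qed

definition Fk :: "nat \<Rightarrow> 'a::euclidean_space \<times> real \<Rightarrow> ennreal" where
  "Fk k = (\<lambda>(x,r). indicator (UNIV - {0}) x * (indicator {0<..} r * ennreal (arcsine_kernel k r (norm x))))"

definition Tm :: "'a::euclidean_space \<times> real \<Rightarrow> 'a" where
  "Tm = (\<lambda>(x,r). r *\<^sub>R (x /\<^sub>R norm x))"

lemma kernel_meas: "(\<lambda>(r,s). arcsine_kernel k r s) \<in> borel_measurable (borel \<Otimes>\<^sub>M borel)"
  unfolding arcsine_kernel_def by measurable

lemma Fk_meas: "Fk k \<in> borel_measurable (borel \<Otimes>\<^sub>M borel)"
proof -
  have "(\<lambda>z. arcsine_kernel k (snd z) (norm (fst z))) \<in> borel_measurable (borel \<Otimes>\<^sub>M borel)"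
    using measurable_compose[OF _ kernel_meas, of "\<lambda>z. (snd z, norm (fst z))" "borel \<Otimes>\<^sub>M borel" k]
    by (simp add: split_beta) measurable
  then show ?thesis unfolding Fk_def split_beta by measurable
qed

lemma Tm_meas: "Tm \<in> borel_measurable (borel \<Otimes>\<^sub>M borel)"
  unfolding Tm_def split_beta by measurable

lemma rep:
  fixes nu :: "'a::euclidean_space measure"
  assumes bm: "borel_measure_on nu"
  shows "arcsine_transform k nu = distr (density (nu \<Otimes>\<^sub>M lborel) (Fk k)) borel Tm"
    (is "_ = ?M")
proof -
  have snu: "sets nu = sets borel" using bm by (simp add: borel_measure_on_def)
  have spnu: "space nu = UNIV" using sets_eq_imp_space_eq[OF snu] by simp
  have sP: "sets (nu \<Otimes>\<^sub>M lborel) = sets (borel \<Otimes>\<^sub>M borel)"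
    by (rule sets_pair_measure_cong[OF snu]) simp
  have spP: "space (nu \<Otimes>\<^sub>M lborel) = UNIV" by (simp add: space_pair_measure spnu)
  have Fm: "Fk k \<in> borel_measurable (nu \<Otimes>\<^sub>M lborel)"
    using Fk_meas measurable_cong_sets[OF sP refl] by blast
  have Tmm: "Tm \<in> measurable (nu \<Otimes>\<^sub>M lborel) borel"
    using Tm_meas measurable_cong_sets[OF sP refl] by blast
  have eq: "(\<integral>\<^sup>+ x. indicator (UNIV - {0}) x *
        (\<integral>\<^sup>+ r. indicator {0<..} r * ennreal (arcsine_kernel k r (norm x))
              * indicator B (r *\<^sub>R (x /\<^sub>R norm x)) \<partial>lborel) \<partial>nu) = emeasure ?M B"
    if B: "B \<in> sets borel" for B
  proof -
    have TB: "Tm -` B \<inter> space (nu \<Otimes>\<^sub>M lborel) \<in> sets (nu \<Otimes>\<^sub>M lborel)"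
      using Tmm B by (rule measurable_sets)
    have "emeasure ?M B = emeasure (density (nu \<Otimes>\<^sub>M lborel) (Fk k)) (Tm -` B \<inter> space (nu \<Otimes>\<^sub>M lborel))"
      using B Tmm by (simp add: emeasure_distr)
    also have "\<dots> = (\<integral>\<^sup>+ z. Fk k z * indicator (Tm -` B \<inter> space (nu \<Otimes>\<^sub>M lborel)) z \<partial>(nu \<Otimes>\<^sub>M lborel))"
      using Fm TB by (rule emeasure_density)
    also have "\<dots> = (\<integral>\<^sup>+ x. \<integral>\<^sup>+ r. Fk k (x, r) * indicator (Tm -` B \<inter> space (nu \<Otimes>\<^sub>M lborel)) (x, r) \<partial>lborel \<partial>nu)"
      by (rule lborel.nn_integral_fst[symmetric]) (use Fm TB in measurable)
    also have "\<dots> = (\<integral>\<^sup>+ x. indicator (UNIV - {0}) x *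
        (\<integral>\<^sup>+ r. indicator {0<..} r * ennreal (arcsine_kernel k r (norm x))
              * indicator B (r *\<^sub>R (x /\<^sub>R norm x)) \<partial>lborel) \<partial>nu)"
    proof (rule nn_integral_cong)
      fix x :: 'a
      show "(\<integral>\<^sup>+ r. Fk k (x, r) * indicator (Tm -` B \<inter> space (nu \<Otimes>\<^sub>M lborel)) (x, r) \<partial>lborel) =
        indicator (UNIV - {0}) x * (\<integral>\<^sup>+ r. indicator {0<..} r * ennreal (arcsine_kernel k r (norm x))
              * indicator B (r *\<^sub>R (x /\<^sub>R norm x)) \<partial>lborel)"
        by (cases "x = 0") (simp_all add: Fk_def Tm_def spP indicator_def mult.assoc)
    qed
    finally show ?thesis ..
  qed
  have sM: "sets ?M = sets borel" by simp
  have spM: "space ?M = UNIV" by simp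
  have "arcsine_transform k nu = measure_of UNIV (sets borel) (emeasure ?M)"
    unfolding arcsine_transform_def
    by (rule measure_of_eq) (use eq in \<open>auto simp: sets.sigma_sets_eq[of borel, simplified]\<close>)
  also have "\<dots> = ?M" using measure_of_of_measure[of ?M] sM spM by simp
  finally show ?thesis .
qed

lemma kernel_nonneg: "0 \<le> arcsine_kernel k r s"
  by (simp add: arcsine_kernel_def)

lemma kernel_t:
  assumes k: "k \<in> {1,2::nat}" and s: "s > 0"
  defines "t \<equiv> (if k = 1 then sqrt s else s)"
  shows "t > 0" "t\<^sup>2 = s ^ k"
    "arcsine_kernel k r s = (if 0 < r \<and> r < t then 2/pi * (t\<^sup>2 - r\<^sup>2) powr (-1/2) else 0)"
  using k s by (auto simp: t_def arcsine_kernel_def)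

lemma real_upper:
  assumes t: "t > 0" and r: "0 < r" "r < t"
  shows "2/pi * (t\<^sup>2 - r\<^sup>2) powr (-1/2) * min 1 (r\<^sup>2) \<le> 2/pi * min 1 (t\<^sup>2) * (t\<^sup>2 - r\<^sup>2) powr (-1/2)"
proof -
  have "r\<^sup>2 \<le> t\<^sup>2" using r by (simp add: power_mono)
  hence m: "min 1 (r\<^sup>2) \<le> min 1 (t\<^sup>2)" by simp
  have "(t\<^sup>2 - r\<^sup>2) powr (-1/2) * min 1 (r\<^sup>2) \<le> min 1 (t\<^sup>2) * (t\<^sup>2 - r\<^sup>2) powr (-1/2)"
    using mult_right_mono[OF m powr_ge_zero[of "t\<^sup>2 - r\<^sup>2" "-1/2"]] by (simp add: mult.commute)
  hence "2/pi * ((t\<^sup>2 - r\<^sup>2) powr (-1/2) * min 1 (r\<^sup>2)) \<le> 2/pi * (min 1 (t\<^sup>2) * (t\<^sup>2 - r\<^sup>2) powr (-1/2))"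
    by (rule mult_left_mono) simp
  thus ?thesis by (simp add: mult.assoc)
qed

lemma real_lower:
  assumes t: "t > 0" and r: "t/2 < r" "r < t"
  shows "2/pi * (1/t) * (min 1 (t\<^sup>2) / 4) \<le> 2/pi * (t\<^sup>2 - r\<^sup>2) powr (-1/2) * min 1 (r\<^sup>2)"
proof -
  have r0: "r > 0" using r t by simp
  have pos: "0 < t\<^sup>2 - r\<^sup>2" using r r0 by (simp add: power_strict_mono)
  have "(t\<^sup>2) powr (-1/2) \<le> (t\<^sup>2 - r\<^sup>2) powr (-1/2)"
    using pos by (intro powr_mono2') auto
  moreover have "(t\<^sup>2) powr (-1/2) = 1/t"
  proof -
    have "(t\<^sup>2) powr (-1/2) = (t\<^sup>2) powr (-(1/2))" by simp
    also have "\<dots> = inverse ((t\<^sup>2) powr (1/2))" by (rule powr_minus)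
    also have "\<dots> = inverse t" using t by (simp add: powr_half_sqrt)
    finally show ?thesis by (simp add: inverse_eq_divide)
  qed
  ultimately have a: "1/t \<le> (t\<^sup>2 - r\<^sup>2) powr (-1/2)" by simp
  have "(t/2)\<^sup>2 \<le> r\<^sup>2" using r t by (intro power_mono) auto
  hence "t\<^sup>2 / 4 \<le> r\<^sup>2" by (simp add: power_divide)
  hence b1: "min 1 (t\<^sup>2) / 4 \<le> r\<^sup>2" by linarith
  have b2: "min 1 (t\<^sup>2) / 4 \<le> 1" by linarith
  have b: "min 1 (t\<^sup>2) / 4 \<le> min 1 (r\<^sup>2)" using b1 b2 by (rule min.boundedI[rotated])
  have "(1/t) * (min 1 (t\<^sup>2) / 4) \<le> (t\<^sup>2 - r\<^sup>2) powr (-1/2) * min 1 (r\<^sup>2)"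
    by (rule mult_mono[OF a b]) (use t in auto)
  hence "2/pi * ((1/t) * (min 1 (t\<^sup>2) / 4)) \<le> 2/pi * ((t\<^sup>2 - r\<^sup>2) powr (-1/2) * min 1 (r\<^sup>2))"
    by (rule mult_left_mono) simp
  thus ?thesis by (simp add: mult.assoc)
qed

definition gk :: "nat \<Rightarrow> real \<Rightarrow> ennreal" where
  "gk k s = (\<integral>\<^sup>+ r. indicator {0<..} r * ennreal (arcsine_kernel k r s) * ennreal (min 1 (r\<^sup>2)) \<partial>lborel)"

lemma gk_upper:
  assumes k: "k \<in> {1,2::nat}" and s: "s > 0"
  shows "gk k s \<le> ennreal (min 1 (s ^ k))"
proof -
  define t where "t = (if k = 1 then sqrt s else s)"
  have t: "t > 0" "t\<^sup>2 = s ^ k"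
    and K: "\<And>r. arcsine_kernel k r s = (if 0 < r \<and> r < t then 2/pi * (t\<^sup>2 - r\<^sup>2) powr (-1/2) else 0)"
    using kernel_t[OF k s] unfolding t_def by auto
  have "gk k s \<le> (\<integral>\<^sup>+ r. ennreal (2/pi * min 1 (t\<^sup>2)) * ennreal (indicator {0<..<t} r * (t\<^sup>2 - r\<^sup>2) powr (-1/2)) \<partial>lborel)"
    unfolding gk_def
  proof (rule nn_integral_mono)
    fix r :: real
    show "indicator {0<..} r * ennreal (arcsine_kernel k r s) * ennreal (min 1 (r\<^sup>2))
      \<le> ennreal (2/pi * min 1 (t\<^sup>2)) * ennreal (indicator {0<..<t} r * (t\<^sup>2 - r\<^sup>2) powr (-1/2))"
    proof (cases "0 < r \<and> r < t")
      case True
      have "ennreal (2/pi * (t\<^sup>2 - r\<^sup>2) powr (-1/2)) * ennreal (min 1 (r\<^sup>2))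
          = ennreal (2/pi * (t\<^sup>2 - r\<^sup>2) powr (-1/2) * min 1 (r\<^sup>2))"
        by (rule ennreal_mult'[symmetric]) simp
      also have "\<dots> \<le> ennreal (2/pi * min 1 (t\<^sup>2) * (t\<^sup>2 - r\<^sup>2) powr (-1/2))"
        using real_upper[OF t(1)] True by (intro ennreal_leI) auto
      also have "\<dots> = ennreal (2/pi * min 1 (t\<^sup>2)) * ennreal ((t\<^sup>2 - r\<^sup>2) powr (-1/2))"
        by (rule ennreal_mult') simp
      finally show ?thesis using True by (simp add: K)
    qed (auto simp: K)
  qed
  also have "\<dots> = ennreal (2/pi * min 1 (t\<^sup>2)) * ennreal (pi/2)"
    using kernel_mass[OF t(1)] by (subst nn_integral_cmult) simp_all
  also have "\<dots> = ennreal (min 1 (t\<^sup>2))"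
    by (subst ennreal_mult'[symmetric]) auto
  finally show ?thesis using t by simp
qed

lemma gk_lower:
  assumes k: "k \<in> {1,2::nat}" and s: "s > 0"
  shows "ennreal (min 1 (s ^ k) / (4 * pi)) \<le> gk k s"
proof -
  define t where "t = (if k = 1 then sqrt s else s)"
  have t: "t > 0" "t\<^sup>2 = s ^ k"
    and K: "\<And>r. arcsine_kernel k r s = (if 0 < r \<and> r < t then 2/pi * (t\<^sup>2 - r\<^sup>2) powr (-1/2) else 0)"
    using kernel_t[OF k s] unfolding t_def by auto
  define c where "c = 2/pi * (1/t) * (min 1 (t\<^sup>2) / 4)"
  have "(\<integral>\<^sup>+ r. ennreal c * indicator {t/2<..<t} r \<partial>lborel) \<le> gk k s"
    unfolding gk_def
  proof (rule nn_integral_mono)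
    fix r :: real
    show "ennreal c * indicator {t/2<..<t} r \<le> indicator {0<..} r * ennreal (arcsine_kernel k r s) * ennreal (min 1 (r\<^sup>2))"
    proof (cases "t/2 < r \<and> r < t")
      case True
      have r0: "0 < r" using True t by simp
      have "ennreal c \<le> ennreal (2/pi * (t\<^sup>2 - r\<^sup>2) powr (-1/2) * min 1 (r\<^sup>2))"
        using real_lower[OF t(1)] True unfolding c_def by (intro ennreal_leI) auto
      also have "\<dots> = ennreal (2/pi * (t\<^sup>2 - r\<^sup>2) powr (-1/2)) * ennreal (min 1 (r\<^sup>2))"
        by (rule ennreal_mult') simp
      finally show ?thesis using True r0 by (simp add: K)
    qed auto
  qed
  moreover have "(\<integral>\<^sup>+ r. ennreal c * indicator {t/2<..<t} r \<partial>lborel) = ennreal c * ennreal (t - t/2)"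
    using t by (simp add: nn_integral_cmult_indicator emeasure_lborel_Ioo)
  moreover have "ennreal c * ennreal (t - t/2) = ennreal (min 1 (t\<^sup>2) / (4 * pi))"
  proof -
    have "c \<ge> 0" unfolding c_def using t s by simp
    hence "ennreal c * ennreal (t - t/2) = ennreal (c * (t - t/2))" by (rule ennreal_mult'[symmetric])
    also have "c * (t - t/2) = min 1 (t\<^sup>2) / (4 * pi)" unfolding c_def using t by (simp add: field_simps)
    finally show ?thesis .
  qed
  ultimately show ?thesis using t by simp
qed

lemma norm_Tm: "x \<noteq> 0 \<Longrightarrow> norm (Tm (x,r)) = \<bar>r\<bar>"
  by (simp add: Tm_def norm_sgn flip: sgn_div_norm)

lemma Fk_Tm0: "Fk k (x,r) * indicator {0} (Tm (x,r)) = 0"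
proof (cases "x = 0 \<or> r \<le> 0")
  case True thus ?thesis by (auto simp: Fk_def)
next
  case False
  hence "Tm (x,r) \<noteq> 0" using norm_Tm[of x r] by auto
  thus ?thesis by simp
qed

lemma transform_integral:
  fixes nu :: "'a::euclidean_space measure"
  assumes bm: "borel_measure_on nu" and f: "f \<in> borel_measurable borel"
  shows "(\<integral>\<^sup>+ y. f y \<partial>arcsine_transform k nu) = (\<integral>\<^sup>+ x. \<integral>\<^sup>+ r. Fk k (x,r) * f (Tm (x,r)) \<partial>lborel \<partial>nu)"
proof -
  have snu: "sets nu = sets borel" using bm by (simp add: borel_measure_on_def)
  have sP: "sets (nu \<Otimes>\<^sub>M lborel) = sets (borel \<Otimes>\<^sub>M borel)"
    by (rule sets_pair_measure_cong[OF snu]) simp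
  have Fm: "Fk k \<in> borel_measurable (nu \<Otimes>\<^sub>M lborel)"
    using Fk_meas measurable_cong_sets[OF sP refl] by blast
  have Tmm: "Tm \<in> measurable (nu \<Otimes>\<^sub>M lborel) borel"
    using Tm_meas measurable_cong_sets[OF sP refl] by blast
  have fT: "(\<lambda>z. f (Tm z)) \<in> borel_measurable (nu \<Otimes>\<^sub>M lborel)"
    using measurable_compose[OF Tmm f] .
  have "(\<integral>\<^sup>+ y. f y \<partial>arcsine_transform k nu) = (\<integral>\<^sup>+ z. f (Tm z) \<partial>density (nu \<Otimes>\<^sub>M lborel) (Fk k))"
    unfolding rep[OF bm] using Tmm f by (subst nn_integral_distr) auto
  also have "\<dots> = (\<integral>\<^sup>+ z. Fk k z * f (Tm z) \<partial>(nu \<Otimes>\<^sub>M lborel))"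
    using Fm fT by (rule nn_integral_density)
  also have "\<dots> = (\<integral>\<^sup>+ x. \<integral>\<^sup>+ r. Fk k (x,r) * f (Tm (x,r)) \<partial>lborel \<partial>nu)"
    by (rule lborel.nn_integral_fst[symmetric]) (use Fm fT in measurable)
  finally show ?thesis .
qed

lemma sets_transform: "borel_measure_on nu \<Longrightarrow> sets (arcsine_transform k nu) = sets borel"
  by (simp add: rep)

lemma transform_zero:
  fixes nu :: "'a::euclidean_space measure"
  assumes bm: "borel_measure_on nu"
  shows "emeasure (arcsine_transform k nu) {0} = 0"
proof -
  have "emeasure (arcsine_transform k nu) {0} = (\<integral>\<^sup>+ y. indicator {0} y \<partial>arcsine_transform k nu)"
    using sets_transform[OF bm] by (simp add: nn_integral_indicator)
  also have "\<dots> = (\<integral>\<^sup>+ x. \<integral>\<^sup>+ r. Fk k (x,r) * indicator {0} (Tm (x,r)) \<partial>lborel \<partial>nu)"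
    by (rule transform_integral[OF bm]) simp
  also have "\<dots> = 0"
    by (simp add: Fk_Tm0)
  finally show ?thesis .
qed

lemma transform_levy_int:
  fixes nu :: "'a::euclidean_space measure"
  assumes bm: "borel_measure_on nu"
  shows "(\<integral>\<^sup>+ y. ennreal (min 1 (norm y ^ 2)) \<partial>arcsine_transform k nu)
       = (\<integral>\<^sup>+ x. indicator (UNIV - {0}) x * gk k (norm x) \<partial>nu)"
proof -
  have "(\<integral>\<^sup>+ y. ennreal (min 1 (norm y ^ 2)) \<partial>arcsine_transform k nu)
     = (\<integral>\<^sup>+ x. \<integral>\<^sup>+ r. Fk k (x,r) * ennreal (min 1 (norm (Tm (x,r)) ^ 2)) \<partial>lborel \<partial>nu)"
    by (rule transform_integral[OF bm]) measurable
  also have "\<dots> = (\<integral>\<^sup>+ x. indicator (UNIV - {0}) x * gk k (norm x) \<partial>nu)"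
  proof (rule nn_integral_cong)
    fix x :: 'a
    show "(\<integral>\<^sup>+ r. Fk k (x,r) * ennreal (min 1 (norm (Tm (x,r)) ^ 2)) \<partial>lborel) = indicator (UNIV - {0}) x * gk k (norm x)"
    proof (cases "x = 0")
      case True thus ?thesis by (simp add: Fk_def)
    next
      case False
      have "(\<integral>\<^sup>+ r. Fk k (x,r) * ennreal (min 1 (norm (Tm (x,r)) ^ 2)) \<partial>lborel) = gk k (norm x)"
        unfolding gk_def
      proof (rule nn_integral_cong)
        fix r :: real
        show "Fk k (x,r) * ennreal (min 1 (norm (Tm (x,r)) ^ 2)) = indicator {0<..} r * ennreal (arcsine_kernel k r (norm x)) * ennreal (min 1 (r\<^sup>2))"
          using False norm_Tm[OF False, of r] by (cases "r > 0") (auto simp: Fk_def indicator_def)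
      qed
      thus ?thesis using False by simp
    qed
  qed
  finally show ?thesis .
qed

lemma finite_iff:
  fixes nu :: "'a::euclidean_space measure"
  assumes bm: "borel_measure_on nu" and k: "k \<in> {1,2::nat}"
  shows "(\<integral>\<^sup>+ x. indicator (UNIV - {0}) x * gk k (norm x) \<partial>nu) < \<infinity> \<longleftrightarrow>
         (\<integral>\<^sup>+ x. ennreal (min 1 (norm x ^ k)) \<partial>nu) < \<infinity>"
proof -
  have snu: "sets nu = sets borel" using bm by (simp add: borel_measure_on_def)
  have mk: "(\<lambda>x. ennreal (min 1 (norm x ^ k))) \<in> borel_measurable nu"
  proof -
    have "(\<lambda>x::'a. ennreal (min 1 (norm x ^ k))) \<in> borel_measurable borel" by measurable
    thus ?thesis using measurable_cong_sets[OF snu refl] by blast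
  qed
  have up: "(\<integral>\<^sup>+ x. indicator (UNIV - {0}) x * gk k (norm x) \<partial>nu) \<le> (\<integral>\<^sup>+ x. ennreal (min 1 (norm x ^ k)) \<partial>nu)"
  proof (rule nn_integral_mono)
    fix x :: 'a
    show "indicator (UNIV - {0}) x * gk k (norm x) \<le> ennreal (min 1 (norm x ^ k))"
      using gk_upper[OF k, of "norm x"] by (cases "x = 0") auto
  qed
  have low: "ennreal (1 / (4*pi)) * (\<integral>\<^sup>+ x. ennreal (min 1 (norm x ^ k)) \<partial>nu) \<le> (\<integral>\<^sup>+ x. indicator (UNIV - {0}) x * gk k (norm x) \<partial>nu)"
  proof -
    have "ennreal (1 / (4*pi)) * (\<integral>\<^sup>+ x. ennreal (min 1 (norm x ^ k)) \<partial>nu) = (\<integral>\<^sup>+ x. ennreal (1 / (4*pi)) * ennreal (min 1 (norm x ^ k)) \<partial>nu)"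
      by (rule nn_integral_cmult[symmetric]) (rule mk)
    also have "\<dots> \<le> (\<integral>\<^sup>+ x. indicator (UNIV - {0}) x * gk k (norm x) \<partial>nu)"
    proof (rule nn_integral_mono)
      fix x :: 'a
      show "ennreal (1 / (4*pi)) * ennreal (min 1 (norm x ^ k)) \<le> indicator (UNIV - {0}) x * gk k (norm x)"
      proof (cases "x = 0")
        case True thus ?thesis using k by auto
      next
        case False
        have "ennreal (1 / (4*pi)) * ennreal (min 1 (norm x ^ k)) = ennreal (min 1 (norm x ^ k) / (4*pi))"
          by (subst ennreal_mult'[symmetric]) auto
        thus ?thesis using gk_lower[OF k, of "norm x"] False by simp
      qed
    qed
    finally show ?thesis .
  qed
  show ?thesis
  proof
    assume "(\<integral>\<^sup>+ x. indicator (UNIV - {0}) x * gk k (norm x) \<partial>nu) < \<infinity>"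
    with low have "ennreal (1 / (4*pi)) * (\<integral>\<^sup>+ x. ennreal (min 1 (norm x ^ k)) \<partial>nu) < \<infinity>"
      by (rule le_less_trans)
    thus "(\<integral>\<^sup>+ x. ennreal (min 1 (norm x ^ k)) \<partial>nu) < \<infinity>"
      by (auto simp: ennreal_mult_less_top top.not_eq_extremum)
  next
    assume "(\<integral>\<^sup>+ x. ennreal (min 1 (norm x ^ k)) \<partial>nu) < \<infinity>"
    with up show "(\<integral>\<^sup>+ x. indicator (UNIV - {0}) x * gk k (norm x) \<partial>nu) < \<infinity>"
      by (rule le_less_trans)
  qed
qed

lemma k_to_2:
  assumes k: "k \<in> {1,2::nat}"
  shows "(\<integral>\<^sup>+ x. ennreal (min 1 (norm x ^ 2)) \<partial>nu) \<le> (\<integral>\<^sup>+ x. ennreal (min 1 (norm x ^ k)) \<partial>nu)"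
proof (rule nn_integral_mono)
  fix x :: 'a
  have "min 1 (norm x ^ 2) \<le> min 1 (norm x ^ k)"
  proof (cases "k = 1")
    case True
    show ?thesis
    proof (cases "norm x \<le> 1")
      case True
      hence "norm x ^ 2 \<le> norm x" by (simp add: power2_eq_square mult_left_le)
      thus ?thesis using \<open>k = 1\<close> by simp
    next
      case False
      hence "1 \<le> norm x ^ 2" by (simp add: one_le_power)
      thus ?thesis using \<open>k = 1\<close> False by simp
    qed
  next
    case False thus ?thesis using k by simp
  qed
  thus "ennreal (min 1 (norm x ^ 2)) \<le> ennreal (min 1 (norm x ^ k))" by (rule ennreal_leI)
qed

theorem theorem2p2:
  assumes "k \<in> {1, 2::nat}"
  shows "(arcsine_domain k :: 'a::euclidean_space measure set) = levy_class k"
proof (intro set_eqI iffI)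
  fix nu :: "'a measure"
  assume "nu \<in> arcsine_domain k"
  hence bm: "borel_measure_on nu" and z: "emeasure nu {0} = 0" and l: "levy_measure (arcsine_transform k nu)"
    by (auto simp: arcsine_domain_def)
  have "(\<integral>\<^sup>+ x. ennreal (min 1 (norm x ^ k)) \<partial>nu) < \<infinity>"
    using l finite_iff[OF bm assms] transform_levy_int[OF bm, of k] by (simp add: levy_measure_def)
  moreover from this have "(\<integral>\<^sup>+ x. ennreal (min 1 (norm x ^ 2)) \<partial>nu) < \<infinity>"
    using k_to_2[OF assms, of nu] by (rule le_less_trans[rotated])
  ultimately show "nu \<in> levy_class k" using bm z by (simp add: levy_class_def levy_measure_def)
next
  fix nu :: "'a measure"
  assume "nu \<in> levy_class k"
  hence bm: "borel_measure_on nu" and z: "emeasure nu {0} = 0" and f: "(\<integral>\<^sup>+ x. ennreal (min 1 (norm x ^ k)) \<partial>nu) < \<infinity>"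
    by (auto simp: levy_class_def levy_measure_def)
  have "(\<integral>\<^sup>+ y. ennreal (min 1 (norm y ^ 2)) \<partial>arcsine_transform k nu) < \<infinity>"
    using f finite_iff[OF bm assms] transform_levy_int[OF bm, of k] by simp
  hence "levy_measure (arcsine_transform k nu)"
    using transform_zero[OF bm] sets_transform[OF bm] by (simp add: levy_measure_def borel_measure_on_def)
  thus "nu \<in> arcsine_domain k" using bm z by (simp add: arcsine_domain_def)
qed

end
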